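(* Let $\mathbf T$ be a countably infinite homogeneous tournament and $\mathbf T^*$ an expansion of $\mathbf T$ as in the context. If $\mathrm{Age}(\mathbf T^* )$ has the expansion property relative to $\mathrm{Age}(\mathbf T)$, then $\mathrm{Age}(\mathbf T[I_\omega]^* )$ has the expansion property relative to $\mathrm{Age}(\mathbf T[I_\omega])$, where $\mathbf T[I_\omega]$ is the reduct of $\mathbf T[I_\omega]^*$ to $\{E\}$.
   Context: The age $\mathrm{Age}(\mathbf F)$ of a structure $\mathbf F$ is the class of finite structures embeddable in $\mathbf F$. Expansion property: let $L\subseteq L^*$ be relational languages, $\mathcal K$ a class of finite $L$-structures and $\mathcal K^*$ a class of finite $L^*$-structures whose $L$-reducts lie in $\mathcal K$. $\mathcal K^*$ has the expansion property relative to $\mathcal K$ if for every $\mathbf A\in\mathcal K$ there is $\mathbf B\in\mathcal K$ such that for all $\mathbf A^*,\mathbf B^*\in\mathcal K^*$ whose $L$-reducts are $\mathbf A$ and $\mathbf B$ respectively, $\mathbf A^*$ embeds into $\mathbf B^*$. A tournament is a directed graph in which every pair of distinct vertices carries exactly one directed edge; it is homogeneous if every isomorphism between finite substructures extends to an automorphism. $\mathbf T=(T,E^{\mathbf T})$ is a countable homogeneous tournament, and $\mathbf T^*$ is an expansion of $\mathbf T$ to a countable relational language $L_{\mathbf T^*}\supseteq\{E,<\}$ in which $<$ is interpreted as a linear order $<^*$ on $T$. Fix a linear order $\prec$ on $\mathbb N$ with $(\mathbb N,\prec)\cong(\mathbb Q,<)$. The structure $\mathbf T[I_\omega]^*$ has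 universe $T\times\mathbb N$ and language $L_{\mathbf T^*}$, interpreted as: $E((x,i),(y,j))$ iff $E^{\mathbf T}(x,y)$; for each $m$-ary $R\in L_{\mathbf T^*}\setminus\{E,<\}$, $R((x_1,i_1),\dots,(x_m,i_m))$ iff $R^{\mathbf T^*}(x_1,\dots,x_m)$; $(x,i)<(y,j)$ iff $x<^*y$, or $x=y$ and $i\prec j$. *)

theory Defs
  imports Main "HOL-Library.Countable_Set"
begin

text \<open>An L-structure for a set of
  symbols L is one whose relations outside L are empty.\<close>

record ('a, 'r) struc =
  univ :: "'a set"
  rel  :: "'r \<Rightarrow> 'a list set"

definition wf_struc :: "('r \<Rightarrow> nat) \<Rightarrow> ('a, 'r) struc \<Rightarrow> bool" where
  "wf_struc ar S \<longleftrightarrow> (\<forall>R. \<forall>xs \<in> rel S R. length xs = ar R \<and> set xs \<subseteq> univ S)"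

definition reduct :: "'r set \<Rightarrow> ('a, 'r) struc \<Rightarrow> ('a, 'r) struc" where
  "reduct L S = \<lparr>univ = univ S, rel = (\<lambda>R. if R \<in> L then rel S R else {})\<rparr>"

definition embedding :: "('a \<Rightarrow> 'b) \<Rightarrow> ('a, 'r) struc \<Rightarrow> ('b, 'r) struc \<Rightarrow> bool" where
  "embedding f A B \<longleftrightarrow> inj_on f (univ A) \<and> f ` univ A \<subseteq> univ B \<and>
     (\<forall>R xs. set xs \<subseteq> univ A \<longrightarrow> (xs \<in> rel A R \<longleftrightarrow> map f xs \<in> rel B R))"

definition embeds :: "('a, 'r) struc \<Rightarrow> ('b, 'r) struc \<Rightarrow> bool" where
  "embeds A B \<longleftrightarrow> (\<exists>f. embedding f A B)"

text \<open>Since every finite structure is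
  isomorphic to one whose universe is a subset of nat, and all notions below are
  isomorphism invariant, we represent the age by its members with universe in nat.\<close>
definition age :: "('r \<Rightarrow> nat) \<Rightarrow> ('a, 'r) struc \<Rightarrow> (nat, 'r) struc set" where
  "age ar F = {A. wf_struc ar A \<and> finite (univ A) \<and> embeds A F}"

definition expansion_property ::
  "'r set \<Rightarrow> (nat, 'r) struc set \<Rightarrow> (nat, 'r) struc set \<Rightarrow> bool" where
  "expansion_property L K Kstar \<longleftrightarrow>
     (\<forall>A \<in> K. \<exists>B \<in> K. \<forall>As Bs. As \<in> Kstar \<longrightarrow> Bs \<in> Kstar \<longrightarrow>
        reduct L As = A \<longrightarrow> reduct L Bs = B \<longrightarrow> embeds As Bs)"

definition tournament :: "'r \<Rightarrow> ('a, 'r) struc \<Rightarrow> bool" where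
  "tournament E S \<longleftrightarrow>
     (\<forall>x \<in> univ S. [x, x] \<notin> rel S E) \<and>
     (\<forall>x \<in> univ S. \<forall>y \<in> univ S. x \<noteq> y \<longrightarrow> ([x, y] \<in> rel S E \<longleftrightarrow> [y, x] \<notin> rel S E))"

definition partial_iso :: "('a \<Rightarrow> 'a) \<Rightarrow> 'a set \<Rightarrow> ('a, 'r) struc \<Rightarrow> bool" where
  "partial_iso f A S \<longleftrightarrow> inj_on f A \<and> A \<subseteq> univ S \<and> f ` A \<subseteq> univ S \<and>
     (\<forall>R xs. set xs \<subseteq> A \<longrightarrow> (xs \<in> rel S R \<longleftrightarrow> map f xs \<in> rel S R))"

definition automorphism :: "('a \<Rightarrow> 'a) \<Rightarrow> ('a, 'r) struc \<Rightarrow> bool" where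
  "automorphism g S \<longleftrightarrow> bij_betw g (univ S) (univ S) \<and>
     (\<forall>R xs. set xs \<subseteq> univ S \<longrightarrow> (xs \<in> rel S R \<longleftrightarrow> map g xs \<in> rel S R))"

definition homogeneous :: "('a, 'r) struc \<Rightarrow> bool" where
  "homogeneous S \<longleftrightarrow> (\<forall>A f. finite A \<longrightarrow> partial_iso f A S \<longrightarrow>
     (\<exists>g. automorphism g S \<and> (\<forall>x \<in> A. g x = f x)))"

definition strict_linear_order_on :: "'a set \<Rightarrow> ('a \<Rightarrow> 'a \<Rightarrow> bool) \<Rightarrow> bool" where
  "strict_linear_order_on X lt \<longleftrightarrow>
     (\<forall>x \<in> X. \<not> lt x x) \<and>
     (\<forall>x \<in> X. \<forall>y \<in> X. \<forall>z \<in> X. lt x y \<longrightarrow> lt y z \<longrightarrow> lt x z) \<and>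
     (\<forall>x \<in> X. \<forall>y \<in> X. x \<noteq> y \<longrightarrow> lt x y \<or> lt y x)"

text \<open>The structure T[I_omega]* with universe T x nat: every symbol other than Lt is
  interpreted via the first coordinates; Lt is the lexicographic order.\<close>
definition blowup :: "'r \<Rightarrow> (nat \<Rightarrow> nat \<Rightarrow> bool) \<Rightarrow> ('a, 'r) struc \<Rightarrow> ('a \<times> nat, 'r) struc" where
  "blowup Lt prec S =
    \<lparr>univ = univ S \<times> UNIV,
     rel = (\<lambda>R. if R = Lt then
                  {[(x, i), (y, j)] | x i y j. x \<in> univ S \<and> y \<in> univ S \<and>
                      ([x, y] \<in> rel S Lt \<or> (x = y \<and> prec i j))}
                else {xs. set xs \<subseteq> univ S \<times> UNIV \<and> map fst xs \<in> rel S R})\<rparr>"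

end

theory Submission
  imports Defs "HOL-Library.Nat_Bijection"
begin

lemma mono_inj:
  fixes C F :: "'k::linorder set"
  assumes "finite C" "finite F" "card C \<le> card F"
  shows "\<exists>g. (\<forall>x\<in>C. g x \<in> F) \<and> (\<forall>x\<in>C. \<forall>y\<in>C. x < y \<longrightarrow> g x < g y)"
proof -
  define rk where "rk x = card {y\<in>C. y < x}" for x
  define L where "L = sorted_list_of_set F"
  have lenL: "length L = card F" unfolding L_def by simp
  have rk_lt: "rk x < card C" if "x \<in> C" for x
    unfolding rk_def using that assms(1) by (intro psubset_card_mono) auto
  have rk_mono: "rk x < rk y" if "x \<in> C" "y \<in> C" "x < y" for x y
    unfolding rk_def using that assms(1) by (intro psubset_card_mono) auto
  have ss: "sorted_wrt (<) L" unfolding L_def by simp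
  show ?thesis
  proof (intro exI[of _ "\<lambda>x. L ! rk x"] conjI ballI impI)
    fix x assume "x \<in> C"
    then have "rk x < length L" using rk_lt assms lenL by fastforce
    then show "L ! rk x \<in> F" unfolding L_def using assms(2)
      by (metis L_def nth_mem set_sorted_list_of_set)
  next
    fix x y assume "x \<in> C" "y \<in> C" "x < y"
    moreover have "rk y < length L" using rk_lt assms lenL \<open>y \<in> C\<close> by fastforce
    ultimately show "L ! rk x < L ! rk y" using rk_mono ss sorted_wrt_nth_less by blast
  qed
qed

lemma univ_blowup[simp]: "univ (blowup Lt prec S) = univ S \<times> UNIV"
  by (simp add: blowup_def)

lemma rel_blowup_nonLt: "R \<noteq> Lt \<Longrightarrow> rel (blowup Lt prec S) R = {xs. set xs \<subseteq> univ S \<times> UNIV \<and> map fst xs \<in> rel S R}"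
  by (simp add: blowup_def)

lemma rel_blowup_Lt_pair:
  assumes "p \<in> univ S \<times> UNIV" "q \<in> univ S \<times> UNIV"
  shows "[p,q] \<in> rel (blowup Lt prec S) Lt \<longleftrightarrow> [fst p, fst q] \<in> rel S Lt \<or> (fst p = fst q \<and> prec (snd p) (snd q))"
  using assms by (cases p; cases q) (auto simp: blowup_def)

lemma univ_reduct[simp]: "univ (reduct L S) = univ S" by (simp add: reduct_def)
lemma rel_reduct[simp]: "rel (reduct L S) R = (if R \<in> L then rel S R else {})" by (simp add: reduct_def)

lemma emb_nonLt:
  assumes "embedding k S (blowup Lt prec T)" "R \<noteq> Lt" "set xs \<subseteq> univ S"
  shows "xs \<in> rel S R \<longleftrightarrow> map (fst \<circ> k) xs \<in> rel T R"
proof -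
  have "k ` set xs \<subseteq> univ T \<times> UNIV" using assms unfolding embedding_def by auto
  then show ?thesis using assms unfolding embedding_def by (auto simp: rel_blowup_nonLt)
qed

lemma emb_Lt_pair:
  assumes "embedding k S (blowup Lt prec T)" "x \<in> univ S" "y \<in> univ S"
  shows "[x,y] \<in> rel S Lt \<longleftrightarrow> [fst (k x), fst (k y)] \<in> rel T Lt \<or> (fst (k x) = fst (k y) \<and> prec (snd (k x)) (snd (k y)))"
proof -
  have "k x \<in> univ T \<times> UNIV" "k y \<in> univ T \<times> UNIV" using assms unfolding embedding_def by auto
  moreover have "[x,y] \<in> rel S Lt \<longleftrightarrow> [k x, k y] \<in> rel (blowup Lt prec T) Lt"
    using assms unfolding embedding_def by (metis (no_types, lifting) empty_subsetI insert_subset list.set(1) list.simps(15) list.simps(8,9))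
  ultimately show ?thesis using rel_blowup_Lt_pair by metis
qed

lemma tour_eq:
  assumes "tournament E (reduct {E} T)" "x \<in> univ T" "y \<in> univ T"
  shows "x = y \<longleftrightarrow> [x,y] \<notin> rel T E \<and> [y,x] \<notin> rel T E"
  using assms unfolding tournament_def by auto

lemma emb_adj:
  assumes "univ X = univ T \<times> UNIV" "rel X E = {xs. set xs \<subseteq> univ T \<times> UNIV \<and> map fst xs \<in> rel T E}"
    "embedding k S X" "tournament E (reduct {E} T)" "x \<in> univ S" "y \<in> univ S"
  shows "fst (k x) = fst (k y) \<longleftrightarrow> [x,y] \<notin> rel S E \<and> [y,x] \<notin> rel S E"
proof -
  have kx: "k x \<in> univ T \<times> UNIV" "k y \<in> univ T \<times> UNIV" using assms unfolding embedding_def by auto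
  have "[x,y] \<in> rel S E \<longleftrightarrow> [k x, k y] \<in> rel X E" "[y,x] \<in> rel S E \<longleftrightarrow> [k y, k x] \<in> rel X E"
    using assms(3,5,6) unfolding embedding_def by auto
  then show ?thesis using kx assms(2) tour_eq[OF assms(4), of "fst (k x)" "fst (k y)"] by auto
qed

lemma struc_eqI: "univ (S::('a,'r) struc) = univ S' \<Longrightarrow> rel S = rel S' \<Longrightarrow> S = S'"
  by (cases S; cases S') auto

theorem mainTheorem4:
  fixes ar :: "'r::countable \<Rightarrow> nat"
    and E Lt :: 'r
    and Tstar :: "('a, 'r) struc"
    and prec :: "nat \<Rightarrow> nat \<Rightarrow> bool"
  assumes "E \<noteq> Lt" and "ar E = 2" and "ar Lt = 2"
    and "wf_struc ar Tstar"
    and "countable (univ Tstar)" and "infinite (univ Tstar)"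
    and "tournament E (reduct {E} Tstar)"
    and "homogeneous (reduct {E} Tstar)"
    and "strict_linear_order_on (univ Tstar) (\<lambda>x y. [x, y] \<in> rel Tstar Lt)"
    and "\<exists>h :: nat \<Rightarrow> rat. bij h \<and> (\<forall>i j. prec i j \<longleftrightarrow> h i < h j)"
    and "expansion_property {E} (age ar (reduct {E} Tstar)) (age ar Tstar)"
  shows "expansion_property {E} (age ar (reduct {E} (blowup Lt prec Tstar)))
           (age ar (blowup Lt prec Tstar))"
proof -
  let ?BU = "blowup Lt prec Tstar"
  obtain hq :: "nat \<Rightarrow> rat" where hqb: "bij hq" and hqp: "\<And>i j. prec i j \<longleftrightarrow> hq i < hq j"
    using assms(10) by blast
  have hq_inj: "hq i = hq j \<Longrightarrow> i = j" for i j using hqb by (simp add: bij_def inj_eq)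
  have tour: "tournament E (reduct {E} Tstar)" by fact
  have BUE: "rel ?BU E = {xs. set xs \<subseteq> univ Tstar \<times> UNIV \<and> map fst xs \<in> rel Tstar E}"
    using assms(1) by (simp add: rel_blowup_nonLt)
  have Lt_irr: "[x,x] \<notin> rel Tstar Lt" for x
  proof
    assume "[x,x] \<in> rel Tstar Lt"
    then have "x \<in> univ Tstar" using assms(4) unfolding wf_struc_def by fastforce
    then show False using assms(9) \<open>[x,x] \<in> rel Tstar Lt\<close> unfolding strict_linear_order_on_def by blast
  qed
  have wfT: "xs \<in> rel Tstar R \<Longrightarrow> length xs = ar R" for xs R
    using assms(4) unfolding wf_struc_def by blast
  show ?thesis unfolding expansion_property_def
  proof (intro ballI)
    fix A assume A: "A \<in> age ar (reduct {E} ?BU)"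
    then obtain f where f: "embedding f A (reduct {E} ?BU)" and Awf: "wf_struc ar A"
      and Afin: "finite (univ A)"
      unfolding age_def embeds_def by blast
    have f_into: "a \<in> univ A \<Longrightarrow> f a \<in> univ Tstar \<times> UNIV" for a
      using f unfolding embedding_def by auto
    have fadj: "x \<in> univ A \<Longrightarrow> y \<in> univ A \<Longrightarrow>
       fst (f x) = fst (f y) \<longleftrightarrow> [x,y] \<notin> rel A E \<and> [y,x] \<notin> rel A E" for x y
      by (rule emb_adj[OF _ _ f tour]) (auto simp: BUE)
    define r where "r a = (LEAST b. b \<in> univ A \<and> fst (f b) = fst (f a))" for a
    have r1: "r a \<in> univ A \<and> fst (f (r a)) = fst (f a)" if "a \<in> univ A" for a
      unfolding r_def by (rule LeastI[of _ a]) (use that in auto)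
    have r_eq: "r a = r b" if "fst (f a) = fst (f b)" for a b
      unfolding r_def using that by simp
    have rr: "a \<in> univ A \<Longrightarrow> r (r a) = r a" for a using r1 r_eq by metis
    have r_iff: "a \<in> univ A \<Longrightarrow> b \<in> univ A \<Longrightarrow> r a = r b \<longleftrightarrow> fst (f a) = fst (f b)" for a b
      using r1 r_eq by metis
    define A0 where "A0 = \<lparr>univ = r ` univ A, rel = \<lambda>R. if R = E then {xs \<in> rel A E. set xs \<subseteq> r ` univ A} else {}\<rparr>"
    have A0: "A0 \<in> age ar (reduct {E} Tstar)"
    proof -
      have "wf_struc ar A0" using Awf unfolding wf_struc_def A0_def by auto
      moreover have "finite (univ A0)" using Afin unfolding A0_def by simp
      moreover have "embedding (fst \<circ> f) A0 (reduct {E} Tstar)"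
        unfolding embedding_def
      proof (intro conjI allI impI)
        show "inj_on (fst \<circ> f) (univ A0)" unfolding inj_on_def
        proof (intro ballI impI)
          fix x y assume "x \<in> univ A0" "y \<in> univ A0" "(fst \<circ> f) x = (fst \<circ> f) y"
          then obtain a b where "a \<in> univ A" "b \<in> univ A" "x = r a" "y = r b" unfolding A0_def by auto
          then show "x = y" using r1 r_eq \<open>(fst \<circ> f) x = (fst \<circ> f) y\<close> by (metis comp_apply)
        qed
        show "(fst \<circ> f) ` univ A0 \<subseteq> univ (reduct {E} Tstar)" unfolding A0_def
          using r1 f_into by force
      next
        fix R xs assume xs: "set xs \<subseteq> univ A0"
        then have xsA: "set xs \<subseteq> univ A" using r1 unfolding A0_def by auto
        show "xs \<in> rel A0 R \<longleftrightarrow> map (fst \<circ> f) xs \<in> rel (reduct {E} Tstar) R"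
        proof (cases "R = E")
          case True
          have "xs \<in> rel A E \<longleftrightarrow> map f xs \<in> rel ?BU E" using f xsA unfolding embedding_def by auto
          also have "\<dots> \<longleftrightarrow> map (fst \<circ> f) xs \<in> rel Tstar E"
          proof -
            have "set (map f xs) \<subseteq> univ Tstar \<times> UNIV" unfolding set_map using f_into xsA by blast
            then show ?thesis by (simp add: BUE)
          qed
          finally show ?thesis using True xs unfolding A0_def by auto
        next
          case False
          then show ?thesis unfolding A0_def by simp
        qed
      qed
      ultimately show ?thesis unfolding age_def embeds_def by blast
    qed
    obtain B0 where B0: "B0 \<in> age ar (reduct {E} Tstar)" and B0P: "\<And>As Bs. As \<in> age ar Tstar \<Longrightarrow>
        Bs \<in> age ar Tstar \<Longrightarrow> reduct {E} As = A0 \<Longrightarrow> reduct {E} Bs = B0 \<Longrightarrow> embeds As Bs"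
      using assms(11) A0 unfolding expansion_property_def by blast
    then obtain g where g: "embedding g B0 (reduct {E} Tstar)" and B0wf: "wf_struc ar B0"
      and B0fin: "finite (univ B0)"
      unfolding age_def embeds_def by blast
    have g_into: "b \<in> univ B0 \<Longrightarrow> g b \<in> univ Tstar" for b using g unfolding embedding_def by auto
    have g_inj: "inj_on g (univ B0)" using g unfolding embedding_def by auto
    have B0rel: "set xs \<subseteq> univ B0 \<Longrightarrow> xs \<in> rel B0 R \<longleftrightarrow> map g xs \<in> rel (reduct {E} Tstar) R" for xs R
      using g unfolding embedding_def by auto
    have B0set: "xs \<in> rel B0 R \<Longrightarrow> set xs \<subseteq> univ B0" for xs R
      using B0wf unfolding wf_struc_def by auto
    define n where "n = Suc (card (univ A))"
    define UB where "UB = (\<lambda>(b,i). prod_encode (b,i)) ` (univ B0 \<times> {..<n})"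
    define B :: "(nat,'r) struc" where "B = \<lparr>univ = UB, rel = \<lambda>R. if R = E then
       {xs. set xs \<subseteq> UB \<and> map (fst \<circ> prod_decode) xs \<in> rel B0 E} else {}\<rparr>"
    have UB_mem: "b \<in> univ B0 \<Longrightarrow> i < n \<Longrightarrow> prod_encode (b,i) \<in> UB" for b i
      unfolding UB_def by auto
    have UB_dec: "e \<in> UB \<Longrightarrow> fst (prod_decode e) \<in> univ B0 \<and> snd (prod_decode e) < n" for e
      unfolding UB_def by auto
    show "\<exists>B\<in>age ar (reduct {E} ?BU). \<forall>As Bs. As \<in> age ar ?BU \<longrightarrow> Bs \<in> age ar ?BU \<longrightarrow>
          reduct {E} As = A \<longrightarrow> reduct {E} Bs = B \<longrightarrow> embeds As Bs"
    proof (intro bexI allI impI)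
      show "B \<in> age ar (reduct {E} ?BU)"
      proof -
        have "wf_struc ar B" unfolding wf_struc_def B_def using B0wf unfolding wf_struc_def
          by (auto simp: assms(2)) (metis assms(2) length_map)
        moreover have "finite (univ B)" unfolding B_def UB_def using B0fin by simp
        moreover have "embedding (\<lambda>e. (g (fst (prod_decode e)), snd (prod_decode e))) B (reduct {E} ?BU)"
          unfolding embedding_def
        proof (intro conjI allI impI)
          show "inj_on (\<lambda>e. (g (fst (prod_decode e)), snd (prod_decode e))) (univ B)"
          proof (rule inj_onI)
            fix x y assume xy: "x \<in> univ B" "y \<in> univ B"
              "(g (fst (prod_decode x)), snd (prod_decode x)) = (g (fst (prod_decode y)), snd (prod_decode y))"
            then have "fst (prod_decode x) = fst (prod_decode y)"
              using UB_dec g_inj unfolding B_def inj_on_def by auto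
            moreover have "snd (prod_decode x) = snd (prod_decode y)" using xy by auto
            ultimately have "prod_decode x = prod_decode y" by (simp add: prod_eq_iff)
            then show "x = y" by (metis prod_decode_inverse)
          qed
          show "(\<lambda>e. (g (fst (prod_decode e)), snd (prod_decode e))) ` univ B \<subseteq> univ (reduct {E} ?BU)"
            using UB_dec g_into unfolding B_def by auto
        next
          fix R xs assume xs: "set xs \<subseteq> univ B"
          then have xsU: "set xs \<subseteq> UB" unfolding B_def by simp
          show "xs \<in> rel B R \<longleftrightarrow> map (\<lambda>e. (g (fst (prod_decode e)), snd (prod_decode e))) xs \<in> rel (reduct {E} ?BU) R"
          proof (cases "R = E")
            case True
            have s0: "set (map (fst \<circ> prod_decode) xs) \<subseteq> univ B0" using xsU UB_dec by auto
            have s1: "set (map (\<lambda>e. (g (fst (prod_decode e)), snd (prod_decode e))) xs) \<subseteq> univ Tstar \<times> UNIV"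
              using xsU UB_dec g_into by auto
            have "xs \<in> rel B R \<longleftrightarrow> map (fst \<circ> prod_decode) xs \<in> rel B0 E" using True xsU unfolding B_def by simp
            also have "\<dots> \<longleftrightarrow> map g (map (fst \<circ> prod_decode) xs) \<in> rel Tstar E" using B0rel[OF s0, of E] by simp
            also have "\<dots> \<longleftrightarrow> map (\<lambda>e. (g (fst (prod_decode e)), snd (prod_decode e))) xs \<in> rel (reduct {E} ?BU) R"
              using True s1 by (simp add: BUE comp_def)
            finally show ?thesis .
          qed (simp add: B_def)
        qed
        ultimately show ?thesis unfolding age_def embeds_def by blast
      qed
    next
      fix As Bs assume As: "As \<in> age ar ?BU" and Bs: "Bs \<in> age ar ?BU"
        and AsA: "reduct {E} As = A" and BsB: "reduct {E} Bs = B"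
      obtain fA where fA: "embedding fA As ?BU" and Aswf: "wf_struc ar As"
        using As unfolding age_def embeds_def by blast
      obtain hB where hB: "embedding hB Bs ?BU" and Bswf: "wf_struc ar Bs"
        using Bs unfolding age_def embeds_def by blast
      have uAs: "univ As = univ A" using arg_cong[OF AsA, of univ] by simp
      have eAs: "rel As E = rel A E" using arg_cong[OF AsA, of "\<lambda>S. rel S E"] by simp
      have uBs: "univ Bs = UB" using arg_cong[OF BsB, of univ] by (simp add: B_def)
      have eBs: "rel Bs E = rel B E" using arg_cong[OF BsB, of "\<lambda>S. rel S E"] by simp
      have fA_into: "a \<in> univ A \<Longrightarrow> fA a \<in> univ Tstar \<times> UNIV" for a
        using fA uAs unfolding embedding_def by auto
      have hB_into: "e \<in> UB \<Longrightarrow> hB e \<in> univ Tstar \<times> UNIV" for e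
        using hB uBs unfolding embedding_def by auto
      have fA_inj: "inj_on fA (univ A)" using fA uAs unfolding embedding_def by auto
      have hB_inj: "inj_on hB UB" using hB uBs unfolding embedding_def by auto
      have fAadj: "fst (fA x) = fst (fA y) \<longleftrightarrow> fst (f x) = fst (f y)" if "x \<in> univ A" "y \<in> univ A" for x y
        using emb_adj[OF _ BUE fA tour, of x y] fadj[OF that] that uAs eAs by simp
      have hBadj: "fst (hB e) = fst (hB e') \<longleftrightarrow> fst (prod_decode e) = fst (prod_decode e')"
        if "e \<in> UB" "e' \<in> UB" for e e'
      proof -
        have d: "fst (prod_decode e) \<in> univ B0" "fst (prod_decode e') \<in> univ B0" using UB_dec that by auto
        have "[e,e'] \<in> rel B E \<longleftrightarrow> [g (fst (prod_decode e)), g (fst (prod_decode e'))] \<in> rel Tstar E"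
          using that B0rel[of "[fst (prod_decode e), fst (prod_decode e')]" E] d unfolding B_def by auto
        moreover have "[e',e] \<in> rel B E \<longleftrightarrow> [g (fst (prod_decode e')), g (fst (prod_decode e))] \<in> rel Tstar E"
          using that B0rel[of "[fst (prod_decode e'), fst (prod_decode e)]" E] d unfolding B_def by auto
        moreover have "fst (hB e) = fst (hB e') \<longleftrightarrow> [e,e'] \<notin> rel Bs E \<and> [e',e] \<notin> rel Bs E"
          using emb_adj[OF _ BUE hB tour, of e e'] that uBs by simp
        moreover have "g (fst (prod_decode e)) = g (fst (prod_decode e')) \<longleftrightarrow> fst (prod_decode e) = fst (prod_decode e')"
          using g_inj d unfolding inj_on_def by metis
        ultimately show ?thesis using tour_eq[OF tour g_into[OF d(1)] g_into[OF d(2)]] eBs by simp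
      qed
      have fA_r: "a \<in> univ A \<Longrightarrow> fst (fA (r a)) = fst (fA a)" for a using fAadj r1 by metis
      have r_iffA: "a \<in> univ A \<Longrightarrow> b \<in> univ A \<Longrightarrow> r a = r b \<longleftrightarrow> fst (fA a) = fst (fA b)" for a b
        using r_iff fAadj by metis
      have rA: "a \<in> univ A \<Longrightarrow> r a \<in> univ A" for a using r1 by blast
      define As0 where "As0 = \<lparr>univ = r ` univ A, rel = \<lambda>R. {xs \<in> rel As R. set xs \<subseteq> r ` univ A}\<rparr>"
      have As0rel: "xs \<in> rel As R \<longleftrightarrow> map (fst \<circ> fA) xs \<in> rel Tstar R" if xs: "set xs \<subseteq> r ` univ A" for xs R
      proof -
        have xsA: "set xs \<subseteq> univ As" using xs rA uAs by auto
        show ?thesis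
        proof (cases "R = Lt")
          case False
          then show ?thesis using emb_nonLt[OF fA False xsA] by simp
        next
          case RLt: True
          show ?thesis
          proof (cases "length xs = 2")
            case True
            then obtain a b where ab: "xs = [a,b]" by (auto simp: numeral_2_eq_2 length_Suc_conv)
            have abA: "a \<in> univ As" "b \<in> univ As" using xsA ab by auto
            have "fst (fA a) = fst (fA b) \<Longrightarrow> a = b"
              using xs ab r_iffA rA rr by auto
            then show ?thesis using emb_Lt_pair[OF fA abA] ab RLt hqp Lt_irr by auto
          next
            case False
            then show ?thesis using RLt Aswf wfT[of "map (fst \<circ> fA) xs" Lt] assms(3)
              unfolding wf_struc_def by auto
          qed
        qed
      qed
      have As0_age: "As0 \<in> age ar Tstar"
      proof -
        have "wf_struc ar As0" using Aswf unfolding wf_struc_def As0_def by auto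
        moreover have "finite (univ As0)" using Afin unfolding As0_def by simp
        moreover have "embedding (fst \<circ> fA) As0 Tstar"
          unfolding embedding_def
        proof (intro conjI allI impI)
          show "inj_on (fst \<circ> fA) (univ As0)" unfolding inj_on_def
          proof (intro ballI impI)
            fix x y assume "x \<in> univ As0" "y \<in> univ As0" "(fst \<circ> fA) x = (fst \<circ> fA) y"
            then obtain a b where ab: "a \<in> univ A" "b \<in> univ A" "x = r a" "y = r b" unfolding As0_def by auto
            then show "x = y" using r_iffA rA rr \<open>(fst \<circ> fA) x = (fst \<circ> fA) y\<close> by (metis comp_apply)
          qed
          show "(fst \<circ> fA) ` univ As0 \<subseteq> univ Tstar" unfolding As0_def
            using rA fA_into by force
        next
          fix R xs assume xs: "set xs \<subseteq> univ As0"
          then show "xs \<in> rel As0 R \<longleftrightarrow> map (fst \<circ> fA) xs \<in> rel Tstar R"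
            using As0rel[of xs R] unfolding As0_def by auto
        qed
        ultimately show ?thesis unfolding age_def embeds_def by blast
      qed
      have As0red: "reduct {E} As0 = A0"
        by (rule struc_eqI) (auto simp: A0_def As0_def eAs fun_eq_iff)
      define enc0 where "enc0 b = prod_encode (b, 0)" for b
      define Phi where "Phi b = fst (hB (enc0 b))" for b
      have enc0_in: "b \<in> univ B0 \<Longrightarrow> enc0 b \<in> UB" for b unfolding enc0_def using UB_mem n_def by simp
      have Phi_inj: "inj_on Phi (univ B0)"
      proof (rule inj_onI)
        fix x y assume "x \<in> univ B0" "y \<in> univ B0" "Phi x = Phi y"
        then show "x = y" using hBadj[OF enc0_in enc0_in] unfolding Phi_def by (simp add: enc0_def)
      qed
      have Phi_into: "b \<in> univ B0 \<Longrightarrow> Phi b \<in> univ Tstar" for b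
        using hB_into[OF enc0_in] unfolding Phi_def by (simp add: mem_Times_iff)
      define Bs0 where "Bs0 = \<lparr>univ = univ B0, rel = \<lambda>R. {xs. set xs \<subseteq> univ B0 \<and> map Phi xs \<in> rel Tstar R}\<rparr>"
      have Bs0_age: "Bs0 \<in> age ar Tstar"
      proof -
        have "wf_struc ar Bs0" unfolding wf_struc_def Bs0_def using wfT by (auto) (metis length_map)
        moreover have "finite (univ Bs0)" using B0fin unfolding Bs0_def by simp
        moreover have "embedding Phi Bs0 Tstar"
          unfolding embedding_def Bs0_def using Phi_inj Phi_into by auto
        ultimately show ?thesis unfolding age_def embeds_def by blast
      qed
      have Bs0red: "reduct {E} Bs0 = B0"
      proof (rule struc_eqI)
        show "univ (reduct {E} Bs0) = univ B0" by (simp add: Bs0_def)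
        show "rel (reduct {E} Bs0) = rel B0"
        proof
          fix R
          show "rel (reduct {E} Bs0) R = rel B0 R"
          proof (cases "R = E")
            case True
            have key: "map Phi xs \<in> rel Tstar E \<longleftrightarrow> xs \<in> rel B0 E" if xs: "set xs \<subseteq> univ B0" for xs
            proof -
              have s: "set (map enc0 xs) \<subseteq> univ Bs" using xs enc0_in uBs by auto
              have eq: "map Phi xs = map (fst \<circ> hB) (map enc0 xs)" unfolding Phi_def by (simp add: comp_def)
              have "map Phi xs \<in> rel Tstar E \<longleftrightarrow> map enc0 xs \<in> rel Bs E"
                using emb_nonLt[OF hB assms(1) s] by (simp only: eq)
              also have "\<dots> \<longleftrightarrow> map enc0 xs \<in> rel B E" using eBs by simp
              also have "\<dots> \<longleftrightarrow> xs \<in> rel B0 E" using s uBs unfolding B_def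
                by (simp add: comp_def enc0_def)
              finally show ?thesis .
            qed
            show ?thesis using True key B0set unfolding Bs0_def by auto
          next
            case False
            have "rel B0 R = {}"
            proof -
              have "xs \<notin> rel B0 R" for xs
                using B0rel[OF B0set, of xs R] False by auto
              then show ?thesis by auto
            qed
            then show ?thesis using False by simp
          qed
        qed
      qed
      obtain phi where phi: "embedding phi As0 Bs0"
        using B0P[OF As0_age Bs0_age As0red Bs0red] unfolding embeds_def by blast
      have phi_into: "c \<in> r ` univ A \<Longrightarrow> phi c \<in> univ B0" for c
        using phi unfolding embedding_def As0_def Bs0_def by auto
      have phi_inj: "inj_on phi (r ` univ A)" using phi unfolding embedding_def As0_def by auto
      have phi_rel: "set xs \<subseteq> r ` univ A \<Longrightarrow> xs \<in> rel As0 R \<longleftrightarrow> map phi xs \<in> rel Bs0 R" for xs R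
        using phi unfolding embedding_def As0_def by auto
      define kA where "kA a = hq (snd (fA a))" for a
      define kB where "kB e = hq (snd (hB e))" for e
      define Fb where "Fb b = (\<lambda>i. prod_encode (b,i)) ` {..<n}" for b
      have Fb_sub: "b \<in> univ B0 \<Longrightarrow> Fb b \<subseteq> UB" for b unfolding Fb_def using UB_mem by auto
      have Fb_fst: "fst (hB e) = Phi b" if "b \<in> univ B0" "e \<in> Fb b" for b e
      proof -
        have "fst (prod_decode e) = b" using that(2) unfolding Fb_def by auto
        then show ?thesis unfolding Phi_def using hBadj[OF _ enc0_in[OF that(1)], of e] Fb_sub that
          by (auto simp: enc0_def)
      qed
      have kB_inj: "inj_on kB (Fb b)" if b: "b \<in> univ B0" for b
      proof (rule inj_onI)
        fix x y assume xy: "x \<in> Fb b" "y \<in> Fb b" "kB x = kB y"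
        then have "snd (hB x) = snd (hB y)" unfolding kB_def using hq_inj by blast
        moreover have "fst (hB x) = fst (hB y)" using Fb_fst[OF b xy(1)] Fb_fst[OF b xy(2)] by simp
        ultimately have "hB x = hB y" by (simp add: prod_eq_iff)
        then show "x = y" using hB_inj Fb_sub[OF b] xy by (meson inj_onD subsetD)
      qed
      have card_Fb: "card (kB ` Fb b) = n" if b: "b \<in> univ B0" for b
      proof -
        have "inj_on (\<lambda>i. prod_encode (b,i)) {..<n}" by (rule inj_onI) (simp add: prod_encode_eq)
        then have "card (Fb b) = n" unfolding Fb_def by (simp add: card_image)
        then show ?thesis using card_image[OF kB_inj[OF b]] by simp
      qed
      define C where "C c = {x \<in> univ A. r x = c}" for c
      have "\<forall>c\<in>r ` univ A. \<exists>G. (\<forall>x\<in>kA ` C c. G x \<in> kB ` Fb (phi c)) \<and>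
               (\<forall>x\<in>kA ` C c. \<forall>y\<in>kA ` C c. x < y \<longrightarrow> G x < G y)"
      proof
        fix c assume c: "c \<in> r ` univ A"
        have "card (kA ` C c) \<le> card (C c)" using Afin unfolding C_def by (intro card_image_le) simp
        also have "\<dots> \<le> card (univ A)" using Afin unfolding C_def by (intro card_mono) auto
        also have "\<dots> \<le> card (kB ` Fb (phi c))" using card_Fb[OF phi_into[OF c]] n_def by simp
        finally have cc: "card (kA ` C c) \<le> card (kB ` Fb (phi c))" .
        show "\<exists>G. (\<forall>x\<in>kA ` C c. G x \<in> kB ` Fb (phi c)) \<and>
               (\<forall>x\<in>kA ` C c. \<forall>y\<in>kA ` C c. x < y \<longrightarrow> G x < G y)"
          by (rule mono_inj[OF _ _ cc]) (use Afin in \<open>auto simp: C_def Fb_def\<close>)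
      qed
      note ex = this
      obtain G where G': "\<forall>c\<in>r ` univ A. (\<forall>x\<in>kA ` C c. G c x \<in> kB ` Fb (phi c)) \<and>
               (\<forall>x\<in>kA ` C c. \<forall>y\<in>kA ` C c. x < y \<longrightarrow> G c x < G c y)"
        using bchoice[OF ex] by (rule exE)
      have G: "(\<forall>x\<in>kA ` C c. G c x \<in> kB ` Fb (phi c)) \<and>
               (\<forall>x\<in>kA ` C c. \<forall>y\<in>kA ` C c. x < y \<longrightarrow> G c x < G c y)" if "c \<in> r ` univ A" for c
        using G' that by (rule bspec)
      define psi where "psi a = inv_into (Fb (phi (r a))) kB (G (r a) (kA a))" for a
      have inC: "a \<in> univ A \<Longrightarrow> kA a \<in> kA ` C (r a)" for a unfolding C_def by auto
      have psi1: "psi a \<in> Fb (phi (r a)) \<and> kB (psi a) = G (r a) (kA a)" if a: "a \<in> univ A" for a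
      proof -
        have "G (r a) (kA a) \<in> kB ` Fb (phi (r a))" using G[OF imageI[OF a]] inC[OF a] by blast
        then show ?thesis unfolding psi_def by (simp add: inv_into_into f_inv_into_f)
      qed
      have psi_UB: "psi a \<in> UB" if a: "a \<in> univ A" for a
        using psi1[OF a] Fb_sub[OF phi_into[OF imageI[OF a]]] by blast
      have psi_fst: "fst (hB (psi a)) = Phi (phi (r a))" if a: "a \<in> univ A" for a
        using psi1[OF a] Fb_fst[OF phi_into[OF imageI[OF a]]] by blast
      have psi_fsteq: "fst (hB (psi a)) = fst (hB (psi b)) \<longleftrightarrow> r a = r b"
        if ab: "a \<in> univ A" "b \<in> univ A" for a b
      proof -
        have "Phi (phi (r a)) = Phi (phi (r b)) \<longleftrightarrow> phi (r a) = phi (r b)"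
          by (rule inj_on_eq_iff[OF Phi_inj]) (use phi_into ab in auto)
        also have "\<dots> \<longleftrightarrow> r a = r b" by (rule inj_on_eq_iff[OF phi_inj]) (use ab in auto)
        finally show ?thesis using psi_fst ab by simp
      qed
      have Gmono: "kA a < kA b \<longleftrightarrow> kB (psi a) < kB (psi b)"
        if ab: "a \<in> univ A" "b \<in> univ A" "r a = r b" for a b
      proof -
        have m: "\<forall>x\<in>kA ` C (r a). \<forall>y\<in>kA ` C (r a). x < y \<longrightarrow> G (r a) x < G (r a) y"
          using G[OF imageI[OF ab(1)]] by blast
        have "kA b \<in> kA ` C (r a)" using inC[OF ab(2)] ab by simp
        note ka = inC[OF ab(1)]
        note kb = \<open>kA b \<in> kA ` C (r a)\<close>
        have pa: "kB (psi a) = G (r a) (kA a)" using psi1[OF ab(1)] by simp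
        have pb: "kB (psi b) = G (r a) (kA b)" using psi1[OF ab(2)] ab(3) by simp
        show ?thesis
        proof
          assume "kA a < kA b"
          then show "kB (psi a) < kB (psi b)" unfolding pa pb using m ka kb by blast
        next
          assume lt: "kB (psi a) < kB (psi b)"
          show "kA a < kA b"
          proof (rule ccontr)
            assume "\<not> kA a < kA b"
            then have "kA b < kA a \<or> kA a = kA b" by auto
            then show False
            proof
              assume "kA b < kA a"
              then have "G (r a) (kA b) < G (r a) (kA a)" using m ka kb by blast
              then show False using lt unfolding pa pb by simp
            next
              assume "kA a = kA b"
              then show False using lt unfolding pa pb by simp
            qed
          qed
        qed
      qed
      show "embeds As Bs" unfolding embeds_def embedding_def
      proof (intro exI[of _ psi] conjI allI impI)
        show "inj_on psi (univ As)"
        proof (rule inj_onI)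
          fix a b assume ab: "a \<in> univ As" "b \<in> univ As" "psi a = psi b"
          then have abA: "a \<in> univ A" "b \<in> univ A" using uAs by auto
          have rab: "r a = r b" using psi_fsteq[OF abA] ab by simp
          have "\<not> kA a < kA b" "\<not> kA b < kA a" using Gmono[OF abA rab] Gmono[OF abA(2,1) rab[symmetric]] ab by auto
          then have "kA a = kA b" by simp
          then have "snd (fA a) = snd (fA b)" unfolding kA_def using hq_inj by blast
          moreover have "fst (fA a) = fst (fA b)" using r_iffA[OF abA] rab by simp
          ultimately have "fA a = fA b" by (simp add: prod_eq_iff)
          then show "a = b" using fA_inj abA by (meson inj_onD)
        qed
        show "psi ` univ As \<subseteq> univ Bs" using psi_UB uAs uBs by auto
      next
        fix R xs assume xs: "set xs \<subseteq> univ As"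
        then have xsA: "set xs \<subseteq> univ A" using uAs by simp
        have mr: "set (map r xs) \<subseteq> r ` univ A" using xsA by auto
        have sB: "set (map psi xs) \<subseteq> univ Bs" using xsA psi_UB uBs by auto
        have e1: "map (fst \<circ> fA) xs = map (fst \<circ> fA) (map r xs)"
          using xsA fA_r by (auto intro!: map_cong)
        have e2: "map (fst \<circ> hB) (map psi xs) = map Phi (map phi (map r xs))"
          using xsA psi_fst by (auto intro!: map_cong)
        have mp: "set (map phi (map r xs)) \<subseteq> univ B0" using mr phi_into by auto
        have chain: "map (fst \<circ> fA) xs \<in> rel Tstar R' \<longleftrightarrow> map (fst \<circ> hB) (map psi xs) \<in> rel Tstar R'" for R'
        proof -
          have "map (fst \<circ> fA) xs \<in> rel Tstar R' \<longleftrightarrow> map r xs \<in> rel As R'"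
            using As0rel[OF mr, of R'] unfolding e1 by blast
          also have "\<dots> \<longleftrightarrow> map r xs \<in> rel As0 R'" using mr unfolding As0_def by simp
          also have "\<dots> \<longleftrightarrow> map phi (map r xs) \<in> rel Bs0 R'" using phi_rel[OF mr] .
          also have "\<dots> \<longleftrightarrow> map Phi (map phi (map r xs)) \<in> rel Tstar R'" using mp unfolding Bs0_def by simp
          finally show ?thesis unfolding e2 .
        qed
        show "xs \<in> rel As R \<longleftrightarrow> map psi xs \<in> rel Bs R"
        proof (cases "R = Lt")
          case False
          then show ?thesis using emb_nonLt[OF fA False xs] emb_nonLt[OF hB False sB] chain[of R] by simp
        next
          case RLt: True
          show ?thesis
          proof (cases "length xs = 2")
            case True
            then obtain a b where ab: "xs = [a,b]" by (auto simp: numeral_2_eq_2 length_Suc_conv)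
            have abA: "a \<in> univ A" "b \<in> univ A" using xsA ab by auto
            have abAs: "a \<in> univ As" "b \<in> univ As" using abA uAs by auto
            have abBs: "psi a \<in> univ Bs" "psi b \<in> univ Bs" using sB ab by auto
            have c1: "[fst (fA a), fst (fA b)] \<in> rel Tstar Lt \<longleftrightarrow> [fst (hB (psi a)), fst (hB (psi b))] \<in> rel Tstar Lt"
              using chain[of Lt] ab by simp
            have c2: "fst (fA a) = fst (fA b) \<longleftrightarrow> fst (hB (psi a)) = fst (hB (psi b))"
              using r_iffA[OF abA] psi_fsteq[OF abA] by simp
            have c3: "fst (fA a) = fst (fA b) \<Longrightarrow>
               prec (snd (fA a)) (snd (fA b)) \<longleftrightarrow> prec (snd (hB (psi a))) (snd (hB (psi b)))"
              using Gmono[OF abA] r_iffA[OF abA] unfolding hqp kA_def kB_def by simp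
            show ?thesis using emb_Lt_pair[OF fA abAs] emb_Lt_pair[OF hB abBs] c1 c2 c3 ab RLt by auto
          next
            case False
            have "xs \<notin> rel As Lt" using False Aswf assms(3) unfolding wf_struc_def by auto
            moreover have "map psi xs \<notin> rel Bs Lt" using False Bswf assms(3) unfolding wf_struc_def by (metis length_map)
            ultimately show ?thesis using RLt by simp
          qed
        qed
      qed
    qed
  qed
qed

end
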